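(* Let $0<p<1$, $q=1-p$, let $\{X_i,i\geq 1\}$ be independent with $P\{X_i=1\}=p$, $P\{X_i=0\}=q$, and let $K,m\in\mathbb N$. Then $$P\big(M_{2K}^{(m)}\geq K-1\big)=\begin{cases}(K+2)(pq)^{K/2}-2(pq)^K, & \text{if } K \text{ is even},\\ (K+1-2Kpq)(pq)^{\frac{K-1}{2}}-(1-2pq)(pq)^{K-1}, & \text{if } K \text{ is odd}.\end{cases}$$
   Context: For $m,n\in\mathbb N$ let $S_n^{(m)}:=\sum_{i=m+1}^{n+m-1}\big[(1-X_{i-1})X_i+X_{i-1}(1-X_i)\big]$ be the number of switches among $X_m,\ldots,X_{m+n-1}$. For $m,N\in\mathbb N$ and $n=1,\ldots,N$ let $H_{m,n}^{(N)}:=\bigcup_{i=m}^{m+N-n+1}\{S_n^{(i)}=n-1\}$, and $M_N^{(m)}:=\max_{1\leq n\leq N}\{n-1 : H_{m,n}^{(N)}\neq\emptyset\}$ (length of the longest consecutive switches in $X_m,\ldots,X_{m+N-1}$). *)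

theory Defs
  imports "HOL-Probability.Probability"
begin

definition switches :: "(nat \<Rightarrow> nat) \<Rightarrow> nat \<Rightarrow> nat \<Rightarrow> nat" where
  "switches x m n = (\<Sum>i\<in>{m+1..n+m-1}. (1 - x (i-1)) * x i + x (i-1) * (1 - x i))"

definition H_event :: "(nat \<Rightarrow> nat) \<Rightarrow> nat \<Rightarrow> nat \<Rightarrow> nat \<Rightarrow> bool" where
  "H_event x m n N = (\<exists>i\<in>{m..m+N-n}. switches x i n = n - 1)"

definition longest_switches :: "(nat \<Rightarrow> nat) \<Rightarrow> nat \<Rightarrow> nat \<Rightarrow> nat" where
  "longest_switches x m N = Max {n - 1 | n. 1 \<le> n \<and> n \<le> N \<and> H_event x m n N}"

end

theory Submission
  imports Defs
begin

lemma sw_term: "(a::nat) \<le> 1 \<Longrightarrow> b \<le> 1 \<Longrightarrow> (1-a)*b + a*(1-b) = (if a \<noteq> b then 1 else 0)"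
  by (cases a; cases b; auto)

lemma switches_full:
  assumes "1 \<le> n" "\<forall>j. i \<le> j \<and> j < i+n \<longrightarrow> x j \<le> (1::nat)"
  shows "switches x i n = n - 1 \<longleftrightarrow> (\<forall>j. i \<le> j \<and> j+1 < i+n \<longrightarrow> x j \<noteq> x (j+1))"
proof -
  let ?A = "{i+1..n+i-1}"
  have "switches x i n = (\<Sum>j\<in>?A. if x (j-1) \<noteq> x j then 1 else 0)"
    unfolding switches_def
  proof (rule sum.cong)
    fix j assume "j \<in> ?A"
    then have h1: "i \<le> j-1 \<and> j-1 < i+n" and h2: "i \<le> j \<and> j < i+n" by auto
    have a: "x (j-1) \<le> 1" using assms(2) h1 by blast
    have b: "x j \<le> 1" using assms(2) h2 by blast
    show "(1 - x (j-1)) * x j + x (j-1) * (1 - x j) = (if x (j-1) \<noteq> x j then 1 else 0)"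
      by (rule sw_term[OF a b])
  qed simp
  also have "\<dots> = (\<Sum>j\<in>{j\<in>?A. x (j-1) \<noteq> x j}. 1)"
    by (rule sum.inter_filter[symmetric]) simp
  also have "\<dots> = card {j\<in>?A. x (j-1) \<noteq> x j}" by simp
  finally have sw: "switches x i n = card {j\<in>?A. x (j-1) \<noteq> x j}" .
  have cA: "card ?A = n - 1" using assms(1) by simp
  have "switches x i n = n - 1 \<longleftrightarrow> {j\<in>?A. x (j-1) \<noteq> x j} = ?A"
  proof
    assume "switches x i n = n - 1"
    then show "{j\<in>?A. x (j-1) \<noteq> x j} = ?A"
      using sw cA by (intro card_subset_eq) auto
  next
    assume "{j\<in>?A. x (j-1) \<noteq> x j} = ?A"
    then show "switches x i n = n - 1" using sw cA by simp
  qed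
  also have "\<dots> \<longleftrightarrow> (\<forall>j. i \<le> j \<and> j+1 < i+n \<longrightarrow> x j \<noteq> x (j+1))"
  proof
    assume h: "{j\<in>?A. x (j-1) \<noteq> x j} = ?A"
    show "\<forall>j. i \<le> j \<and> j+1 < i+n \<longrightarrow> x j \<noteq> x (j+1)"
    proof (intro allI impI)
      fix j assume "i \<le> j \<and> j+1 < i+n"
      then have "j+1 \<in> ?A" by auto
      then have "j+1 \<in> {j\<in>?A. x (j-1) \<noteq> x j}" using h by simp
      then show "x j \<noteq> x (j+1)" by simp
    qed
  next
    assume h: "\<forall>j. i \<le> j \<and> j+1 < i+n \<longrightarrow> x j \<noteq> x (j+1)"
    show "{j\<in>?A. x (j-1) \<noteq> x j} = ?A"
    proof (intro set_eqI iffI)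
      fix j assume "j \<in> ?A"
      then have "i \<le> j - 1 \<and> (j-1)+1 < i+n" "j - 1 + 1 = j" by auto
      then have "x (j-1) \<noteq> x (j-1+1)" using h by blast
      then show "j \<in> {j\<in>?A. x (j-1) \<noteq> x j}" using \<open>j - 1 + 1 = j\<close> \<open>j \<in> ?A\<close> by simp
    qed auto
  qed
  finally show ?thesis .
qed

lemma H_one: "1 \<le> N \<Longrightarrow> H_event x m 1 N"
  unfolding H_event_def switches_def by (rule bexI[of _ m]) auto

lemma longest_ge:
  assumes "1 \<le> K"
  shows "K - 1 \<le> longest_switches x m (2*K) \<longleftrightarrow> (\<exists>n. K \<le> n \<and> n \<le> 2*K \<and> H_event x m n (2*K))"
proof -
  let ?S = "{n - 1 | n. 1 \<le> n \<and> n \<le> 2*K \<and> H_event x m n (2*K)}"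
  have fin: "finite ?S"
  proof -
    have "?S \<subseteq> (\<lambda>n. n - 1) ` {1..2*K}" by auto
    then show ?thesis by (rule finite_subset) auto
  qed
  have ne: "?S \<noteq> {}" using H_one[of "2*K" x m] assms by force
  have "K - 1 \<le> Max ?S \<longleftrightarrow> (\<exists>s\<in>?S. K - 1 \<le> s)" using Max_ge_iff[OF fin ne] by simp
  also have "\<dots> \<longleftrightarrow> (\<exists>n. K \<le> n \<and> n \<le> 2*K \<and> H_event x m n (2*K))"
  proof
    assume "\<exists>s\<in>?S. K - 1 \<le> s"
    then obtain n where "1 \<le> n" "n \<le> 2*K" "H_event x m n (2*K)" "K - 1 \<le> n - 1" by blast
    then show "\<exists>n. K \<le> n \<and> n \<le> 2*K \<and> H_event x m n (2*K)" using assms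
      by (intro exI[of _ n]) auto
  next
    assume "\<exists>n. K \<le> n \<and> n \<le> 2*K \<and> H_event x m n (2*K)"
    then obtain n where "K \<le> n" "n \<le> 2*K" "H_event x m n (2*K)" by blast
    then have "n - 1 \<in> ?S" using assms by auto
    then show "\<exists>s\<in>?S. K - 1 \<le> s" using \<open>K \<le> n\<close> by (intro bexI[of _ "n-1"]) auto
  qed
  finally show ?thesis unfolding longest_switches_def .
qed

lemma event_char:
  assumes K: "1 \<le> K" and x: "\<forall>j<2*K. x (m+j) \<le> (1::nat)"
  shows "K - 1 \<le> longest_switches x m (2*K) \<longleftrightarrow>
    (\<exists>i\<le>K. \<forall>j. i \<le> j \<and> j+1 < i+K \<longrightarrow> x (m+j) \<noteq> x (m+j+1))"
proof -
  have "K - 1 \<le> longest_switches x m (2*K) \<longleftrightarrow> (\<exists>n. K \<le> n \<and> n \<le> 2*K \<and> H_event x m n (2*K))"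
    by (rule longest_ge[OF K])
  also have "\<dots> \<longleftrightarrow> (\<exists>i\<le>K. \<forall>j. i \<le> j \<and> j+1 < i+K \<longrightarrow> x (m+j) \<noteq> x (m+j+1))"
  proof
    assume "\<exists>n. K \<le> n \<and> n \<le> 2*K \<and> H_event x m n (2*K)"
    then obtain n i where n: "K \<le> n" "n \<le> 2*K" and i: "i \<in> {m..m+2*K-n}" "switches x i n = n - 1"
      unfolding H_event_def by blast
    have xb: "\<forall>j. i \<le> j \<and> j < i+n \<longrightarrow> x j \<le> 1"
    proof (intro allI impI)
      fix j assume "i \<le> j \<and> j < i+n"
      then have "j - m < 2*K" "m + (j - m) = j" using i(1) n by auto
      then show "x j \<le> 1" using x by metis
    qed
    have alt: "\<forall>j. i \<le> j \<and> j+1 < i+n \<longrightarrow> x j \<noteq> x (j+1)"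
      using switches_full[of n i x] xb i(2) n assms by auto
    show "\<exists>i\<le>K. \<forall>j. i \<le> j \<and> j+1 < i+K \<longrightarrow> x (m+j) \<noteq> x (m+j+1)"
    proof (intro exI conjI allI impI)
      show "i - m \<le> K" using i(1) n by auto
      fix j assume "i - m \<le> j \<and> j + 1 < i - m + K"
      then have "i \<le> m+j \<and> m+j+1 < i+n" using i(1) n by auto
      then show "x (m+j) \<noteq> x (m+j+1)" using alt by simp
    qed
  next
    assume "\<exists>i\<le>K. \<forall>j. i \<le> j \<and> j+1 < i+K \<longrightarrow> x (m+j) \<noteq> x (m+j+1)"
    then obtain i where i: "i \<le> K" "\<forall>j. i \<le> j \<and> j+1 < i+K \<longrightarrow> x (m+j) \<noteq> x (m+j+1)" by blast
    have xb: "\<forall>j. m+i \<le> j \<and> j < m+i+K \<longrightarrow> x j \<le> 1"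
    proof (intro allI impI)
      fix j assume "m+i \<le> j \<and> j < m+i+K"
      then have "j - m < 2*K" "m + (j - m) = j" using i(1) by auto
      then show "x j \<le> 1" using x by metis
    qed
    have alt: "\<forall>j. m+i \<le> j \<and> j+1 < m+i+K \<longrightarrow> x j \<noteq> x (j+1)"
    proof (intro allI impI)
      fix j assume "m+i \<le> j \<and> j+1 < m+i+K"
      then have "i \<le> j - m \<and> (j-m)+1 < i+K" "m + (j - m) = j" by auto
      then show "x j \<noteq> x (j+1)" using i(2) by (metis add.assoc)
    qed
    have "switches x (m+i) K = K - 1"
      using switches_full[of K "m+i" x] xb alt K by auto
    then have "H_event x m K (2*K)" unfolding H_event_def using i(1)
      by (intro bexI[of _ "m+i"]) auto
    then show "\<exists>n. K \<le> n \<and> n \<le> 2*K \<and> H_event x m n (2*K)" by auto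
  qed
  finally show ?thesis .
qed

lemma switches_cong: "(\<And>i. i \<ge> m \<Longrightarrow> x i = y i) \<Longrightarrow> i \<ge> m \<Longrightarrow> switches x i n = switches y i n"
  unfolding switches_def by (rule sum.cong) auto

lemma longest_cong: "(\<And>i. i \<ge> m \<Longrightarrow> x i = y i) \<Longrightarrow> longest_switches x m N = longest_switches y m N"
proof -
  assume h: "\<And>i. i \<ge> m \<Longrightarrow> x i = y i"
  have "\<And>n. H_event x m n N = H_event y m n N"
    unfolding H_event_def using switches_cong[of m x y, OF h] by auto
  then show ?thesis unfolding longest_switches_def by simp
qed

lemma alt_char:
  assumes y: "\<forall>j. y j \<le> (1::nat)" and L: "1 \<le> L"
  shows "(\<forall>j. a \<le> j \<and> j+1 < a+L \<longrightarrow> y j \<noteq> y (j+1)) \<longleftrightarrow> (\<exists>c\<le>1. \<forall>j\<in>{a..<a+L}. y j = (c+j) mod 2)"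
proof
  assume h: "\<forall>j. a \<le> j \<and> j+1 < a+L \<longrightarrow> y j \<noteq> y (j+1)"
  define c where "c = (y a + a) mod 2"
  have "d < L \<longrightarrow> y (a+d) = (c + (a+d)) mod 2" for d
  proof (induction d)
    case 0
    obtain v where v: "v = y a" "v \<le> 1" using y by simp
    have "v = ((v + a) mod 2 + a) mod 2" using v(2) by presburger
    then show ?case unfolding c_def using v(1) by simp
  next
    case (Suc d)
    show ?case
    proof
      assume "Suc d < L"
      then have e: "y (a+d) = (c + (a+d)) mod 2" and ne: "y (a+d) \<noteq> y (a+d+1)"
        using Suc h by auto
      have "y (a+d) \<le> 1" "y (a+d+1) \<le> 1" using y by auto
      then have "y (a + Suc d) = 1 - y (a+d)" using ne by auto
      also have "\<dots> = (c + (a + Suc d)) mod 2" using e by presburger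
      finally show "y (a + Suc d) = (c + (a + Suc d)) mod 2" .
    qed
  qed
  then have "\<forall>j\<in>{a..<a+L}. y j = (c+j) mod 2"
    by (metis atLeastLessThan_iff le_add_diff_inverse nat_add_left_cancel_less)
  moreover have "c \<le> 1" unfolding c_def by simp
  ultimately show "\<exists>c\<le>1. \<forall>j\<in>{a..<a+L}. y j = (c+j) mod 2" by blast
next
  assume "\<exists>c\<le>1. \<forall>j\<in>{a..<a+L}. y j = (c+j) mod 2"
  then obtain c where c: "\<forall>j\<in>{a..<a+L}. y j = (c+j) mod 2" by blast
  show "\<forall>j. a \<le> j \<and> j+1 < a+L \<longrightarrow> y j \<noteq> y (j+1)"
  proof (intro allI impI)
    fix j assume "a \<le> j \<and> j+1 < a+L"
    then have "y j = (c+j) mod 2" "y (j+1) = (c+(j+1)) mod 2" using c by auto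
    then show "y j \<noteq> y (j+1)" by presburger
  qed
qed

lemma prodalt:
  fixes w :: "nat \<Rightarrow> real"
  shows "(\<Prod>j\<in>{a..<a+L}. w ((c+j) mod 2)) =
    (w 0 * w 1) ^ (L div 2) * (if odd L then w ((c+a) mod 2) else 1)"
proof (induction L)
  case 0
  then show ?case by simp
next
  case (Suc L)
  have "(\<Prod>j\<in>{a..<a+Suc L}. w ((c+j) mod 2)) = (\<Prod>j\<in>{a..<a+L}. w ((c+j) mod 2)) * w ((c+(a+L)) mod 2)"
    by (simp add: prod.atLeastLessThan_Suc)
  also have "\<dots> = (w 0 * w 1) ^ (L div 2) * (if odd L then w ((c+a) mod 2) else 1) * w ((c+(a+L)) mod 2)"
    using Suc by simp
  also have "\<dots> = (w 0 * w 1) ^ (Suc L div 2) * (if odd (Suc L) then w ((c+a) mod 2) else 1)"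
  proof (cases "odd L")
    case True
    then have sd: "Suc L div 2 = Suc (L div 2)" by presburger
    have "w ((c+a) mod 2) * w ((c+(a+L)) mod 2) = w 0 * w 1"
    proof (cases "even (c+a)")
      case True
      then have "(c+a) mod 2 = 0" "(c+(a+L)) mod 2 = 1" using \<open>odd L\<close> by presburger+
      then show ?thesis by simp
    next
      case False
      then have "(c+a) mod 2 = 1" "(c+(a+L)) mod 2 = 0" using \<open>odd L\<close> by presburger+
      then show ?thesis by simp
    qed
    then show ?thesis using True sd by (simp add: mult.assoc)
  next
    case False
    then have sd: "Suc L div 2 = L div 2" "(c+(a+L)) mod 2 = (c+a) mod 2" by presburger+
    then show ?thesis using False by simp
  qed
  finally show ?case .
qed

locale swsetup = prob_space M for M :: "'a measure" +
  fixes X :: "nat \<Rightarrow> 'a \<Rightarrow> nat" and p q :: real and m :: nat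
  assumes p0: "0 < p" and p1: "p < 1" and qdef: "q = 1 - p"
    and meas: "\<And>i. i \<ge> 1 \<Longrightarrow> X i \<in> measurable M (count_space UNIV)"
    and ind: "indep_vars (\<lambda>_. count_space UNIV) X {1..}"
    and P1: "\<And>i. i \<ge> 1 \<Longrightarrow> prob {\<omega> \<in> space M. X i \<omega> = 1} = p"
    and P0: "\<And>i. i \<ge> 1 \<Longrightarrow> prob {\<omega> \<in> space M. X i \<omega> = 0} = q"
    and m1: "m \<ge> 1"
begin

definition Y :: "nat \<Rightarrow> 'a \<Rightarrow> nat" where "Y j \<omega> = (if X (m+j) \<omega> = 1 then 1 else 0)"
definition w :: "nat \<Rightarrow> real" where "w c = (if c = 1 then p else q)"
definition X0 :: "nat \<Rightarrow> 'a \<Rightarrow> nat" where "X0 i = X (max 1 i)"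

lemma X0_meas[measurable]: "X0 i \<in> measurable M (count_space UNIV)"
  unfolding X0_def by (rule meas) simp

lemma Xm_meas[measurable]: "X (m+j) \<in> measurable M (count_space UNIV)"
  using meas m1 by simp

lemma Y_meas[measurable]: "Y j \<in> measurable M (count_space UNIV)"
  unfolding Y_def by measurable

lemma Y01: "Y j \<omega> \<le> 1" unfolding Y_def by simp

lemma cyl:
  assumes "finite J" "\<forall>j\<in>J. c j \<le> (1::nat)"
  shows "prob {\<omega>\<in>space M. \<forall>j\<in>J. Y j \<omega> = c j} = (\<Prod>j\<in>J. w (c j))"
proof (cases "J = {}")
  case True
  then show ?thesis by (simp add: prob_space)
next
  case False
  define A where "A i = X i -` {v. (if v = 1 then 1 else 0) = c (i - m)} \<inter> space M" for i
  have eq: "{\<omega>\<in>space M. \<forall>j\<in>J. Y j \<omega> = c j} = (\<Inter>i\<in>(\<lambda>j. m+j) ` J. A i)"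
    using False by (auto simp: A_def Y_def)
  have F: "indep_sets (\<lambda>i. {X i -` A \<inter> space M |A. A \<in> sets (count_space UNIV)}) {1..}"
    using ind unfolding indep_vars_def2 by simp
  have "prob (\<Inter>i\<in>(\<lambda>j. m+j) ` J. A i) = (\<Prod>i\<in>(\<lambda>j. m+j) ` J. prob (A i))"
  proof (rule indep_setsD[OF F])
    show "\<forall>i\<in>(\<lambda>j. m+j) ` J. A i \<in> {X i -` B \<inter> space M |B. B \<in> sets (count_space UNIV)}"
    proof
      fix i assume "i \<in> (\<lambda>j. m+j) ` J"
      show "A i \<in> {X i -` B \<inter> space M |B. B \<in> sets (count_space UNIV)}"
        unfolding A_def
        by (rule CollectI, rule exI[of _ "{v. (if v = 1 then 1 else 0) = c (i - m)}"]) simp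
    qed
    show "(\<lambda>j. m+j) ` J \<subseteq> {1..}" using m1 by auto
    show "(\<lambda>j. m+j) ` J \<noteq> {}" using False by simp
    show "finite ((\<lambda>j. m+j) ` J)" using assms(1) by simp
  qed
  also have "\<dots> = (\<Prod>j\<in>J. prob (A (m+j)))"
    by (simp add: prod.reindex inj_on_def)
  also have "\<dots> = (\<Prod>j\<in>J. w (c j))"
  proof (rule prod.cong)
    fix j assume "j \<in> J"
    then have c: "c j \<le> 1" using assms by simp
    have ev: "{\<omega> \<in> space M. X (m+j) \<omega> = 1} \<in> events" by measurable
    have pj: "prob {\<omega> \<in> space M. X (m+j) \<omega> = 1} = p" by (rule P1) (use m1 in simp)
    show "prob (A (m+j)) = w (c j)"
    proof (cases "c j = 1")
      case True
      have "A (m+j) = {\<omega> \<in> space M. X (m+j) \<omega> = 1}" unfolding A_def using True by auto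
      then show ?thesis using True pj by (simp add: w_def)
    next
      case False
      then have c0: "c j = 0" using c by simp
      have "A (m+j) = space M - {\<omega> \<in> space M. X (m+j) \<omega> = 1}" unfolding A_def using c0 by auto
      then have "prob (A (m+j)) = 1 - p" using prob_compl[OF ev] pj by simp
      moreover have "w (c j) = q" using c0 by (simp add: w_def)
      ultimately show ?thesis using qdef by linarith
    qed
  qed simp
  finally have "prob (\<Inter>i\<in>(\<lambda>j. m+j) ` J. A i) = (\<Prod>j\<in>J. w (c j))" .
  then show ?thesis using eq by simp
qed

lemma ex01: "(\<exists>c\<le>(1::nat). P c) = (P 0 \<or> P 1)"
proof
  assume "\<exists>c\<le>(1::nat). P c"
  then obtain c where "c \<le> (1::nat)" "P c" by blast
  moreover have "c = 0 \<or> c = 1" using \<open>c \<le> 1\<close> by auto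
  ultimately show "P 0 \<or> P 1" by auto
qed auto

lemma two_cyl:
  fixes pat :: "nat \<Rightarrow> nat \<Rightarrow> nat"
  assumes "finite J" "j0 \<in> J" "\<forall>c\<le>1. \<forall>j\<in>J. pat c j \<le> (1::nat)" "pat 0 j0 \<noteq> pat 1 j0"
  shows "prob {\<omega>\<in>space M. \<exists>c\<le>1. \<forall>j\<in>J. Y j \<omega> = pat c j} =
    (\<Prod>j\<in>J. w (pat 0 j)) + (\<Prod>j\<in>J. w (pat 1 j))"
proof -
  let ?C = "\<lambda>c. {\<omega>\<in>space M. \<forall>j\<in>J. Y j \<omega> = pat c j}"
  have "{\<omega>\<in>space M. \<exists>c\<le>1. \<forall>j\<in>J. Y j \<omega> = pat c j} = ?C 0 \<union> ?C 1"
  proof (rule set_eqI)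
    fix x
    have "(\<exists>c\<le>(1::nat). \<forall>j\<in>J. Y j x = pat c j) = ((\<forall>j\<in>J. Y j x = pat 0 j) \<or> (\<forall>j\<in>J. Y j x = pat 1 j))"
      by (rule ex01)
    then show "x \<in> {\<omega>\<in>space M. \<exists>c\<le>1. \<forall>j\<in>J. Y j \<omega> = pat c j} \<longleftrightarrow> x \<in> ?C 0 \<union> ?C 1"
      by (simp only: mem_Collect_eq Un_iff conj_disj_distribL)
  qed
  moreover have "?C 0 \<inter> ?C 1 = {}" using assms(2,4) by auto
  moreover have "?C 0 \<in> events" "?C 1 \<in> events" by measurable
  ultimately have "prob {\<omega>\<in>space M. \<exists>c\<le>1. \<forall>j\<in>J. Y j \<omega> = pat c j} = prob (?C 0) + prob (?C 1)"
    using finite_measure_Union by simp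
  also have "\<dots> = (\<Prod>j\<in>J. w (pat 0 j)) + (\<Prod>j\<in>J. w (pat 1 j))"
    using cyl[of J "pat 0"] cyl[of J "pat 1"] assms(1,3) by simp
  finally show ?thesis .
qed

end

lemma (in prob_space) telescope:
  fixes n :: nat
  assumes "\<And>i. E i \<in> events"
  shows "prob (\<Union>i\<le>n. E i) = prob (E 0) + (\<Sum>i\<in>{1..n}. prob (E i - (\<Union>i'<i. E i')))"
proof (induction n)
  case 0
  then show ?case by simp
next
  case (Suc n)
  have u: "(\<Union>i\<le>Suc n. E i) = (\<Union>i\<le>n. E i) \<union> E (Suc n)"
    by (simp add: atMost_Suc Un_commute)
  have u2: "(\<Union>i'<Suc n. E i') = (\<Union>i\<le>n. E i)"
    by (simp add: lessThan_Suc_atMost)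
  have ev: "(\<Union>i\<le>n. E i) \<in> events" by (rule sets.finite_UN) (simp_all add: assms)
  have "prob (\<Union>i\<le>Suc n. E i) = prob (\<Union>i\<le>n. E i) + prob (E (Suc n) - (\<Union>i\<le>n. E i))"
    unfolding u by (rule finite_measure_Union'[OF ev assms])
  also have "\<dots> = prob (E 0) + (\<Sum>i\<in>{1..n}. prob (E i - (\<Union>i'<i. E i'))) + prob (E (Suc n) - (\<Union>i'<Suc n. E i'))"
    using Suc u2 by simp
  also have "\<dots> = prob (E 0) + (\<Sum>i\<in>{1..Suc n}. prob (E i - (\<Union>i'<i. E i')))"
    by simp
  finally show ?case .
qed

context swsetup begin

definition Ev :: "nat \<Rightarrow> nat \<Rightarrow> 'a set" where
  "Ev a L = {\<omega>\<in>space M. \<forall>j. a \<le> j \<and> j+1 < a+L \<longrightarrow> Y j \<omega> \<noteq> Y (j+1) \<omega>}"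
definition Eq :: "nat \<Rightarrow> 'a set" where
  "Eq i = {\<omega>\<in>space M. Y (i-1) \<omega> = Y i \<omega>}"

lemma Yc_sets: "{\<omega>\<in>space M. Y j \<omega> = c} \<in> events"
  by measurable

lemma Ysw_sets: "{\<omega>\<in>space M. Y j \<omega> \<noteq> Y k \<omega>} \<in> events"
proof -
  have "{\<omega>\<in>space M. Y j \<omega> \<noteq> Y k \<omega>} =
    ({\<omega>\<in>space M. Y j \<omega> = 0} \<inter> {\<omega>\<in>space M. Y k \<omega> = 1}) \<union>
    ({\<omega>\<in>space M. Y j \<omega> = 1} \<inter> {\<omega>\<in>space M. Y k \<omega> = 0})"
    unfolding Y_def by auto
  then show ?thesis using Yc_sets by simp
qed

lemma Yeq_sets: "{\<omega>\<in>space M. Y j \<omega> = Y k \<omega>} \<in> events"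
proof -
  have "{\<omega>\<in>space M. Y j \<omega> = Y k \<omega>} = space M - {\<omega>\<in>space M. Y j \<omega> \<noteq> Y k \<omega>}" by auto
  then show ?thesis using Ysw_sets[of j k] by simp
qed

lemma Ev_sets[measurable]: "Ev a L \<in> events"
proof -
  have e: "Ev a L = space M - (\<Union>j\<in>{j. a \<le> j \<and> j+1 < a+L}. {\<omega>\<in>space M. Y j \<omega> = Y (j+1) \<omega>})"
    unfolding Ev_def by auto
  have f: "finite {j. a \<le> j \<and> j+1 < a+L}"
    by (rule finite_subset[of _ "{..<a+L}"]) auto
  have "(\<Union>j\<in>{j. a \<le> j \<and> j+1 < a+L}. {\<omega>\<in>space M. Y j \<omega> = Y (j+1) \<omega>}) \<in> events"
    by (rule sets.finite_UN[OF f]) (rule Yeq_sets)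
  then show ?thesis unfolding e by simp
qed

lemma Eq_sets[measurable]: "Eq i \<in> events"
proof -
  have "Eq i = space M - {\<omega>\<in>space M. Y (i-1) \<omega> \<noteq> Y i \<omega>}" unfolding Eq_def by auto
  then show ?thesis using Ysw_sets[of "i-1" i] by simp
qed

lemma eqv:
  assumes "1 \<le> L"
  shows "(\<forall>j. a \<le> j \<and> j+1 < a+L \<longrightarrow> Y j \<omega> \<noteq> Y (j+1) \<omega>) = (\<exists>c\<le>1. \<forall>j\<in>{a..<a+L}. Y j \<omega> = (c+j) mod 2)"
  by (rule alt_char) (use Y01 assms in auto)

lemma wsum: "w 0 * w 1 = p * q" "w 0 + w 1 = 1" "w 0 = q" "w 1 = p"
  unfolding w_def using qdef by simp_all

lemma PE:
  assumes L: "1 \<le> L"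
  shows "prob (Ev a L) = (p*q)^(L div 2) * (if odd L then 1 else 2)"
proof -
  have "Ev a L = {\<omega>\<in>space M. \<exists>c\<le>1. \<forall>j\<in>{a..<a+L}. Y j \<omega> = (c+j) mod 2}"
    unfolding Ev_def by (simp only: eqv[OF L])
  moreover have h1: "\<forall>c\<le>1. \<forall>j\<in>{a..<a+L}. (c+j) mod 2 \<le> (1::nat)" by (intro allI impI ballI) presburger
  moreover have h2: "(0+a) mod 2 \<noteq> (1+a) mod (2::nat)" by presburger
  moreover have h3: "a \<in> {a..<a+L}" using L by simp
  ultimately have "prob (Ev a L) = (\<Prod>j\<in>{a..<a+L}. w ((0+j) mod 2)) + (\<Prod>j\<in>{a..<a+L}. w ((1+j) mod 2))"
    using two_cyl[of "{a..<a+L}" a "\<lambda>c j. (c+j) mod 2"] by simp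
  also have "\<dots> = (w 0 * w 1) ^ (L div 2) * (if odd L then w ((0+a) mod 2) else 1)
      + (w 0 * w 1) ^ (L div 2) * (if odd L then w ((1+a) mod 2) else 1)"
    by (simp only: prodalt)
  also have "\<dots> = (w 0 * w 1) ^ (L div 2) * ((if odd L then w ((0+a) mod 2) else 1) + (if odd L then w ((1+a) mod 2) else 1))"
    by (simp only: distrib_left)
  also have "\<dots> = (p*q)^(L div 2) * (if odd L then 1 else 2)"
  proof -
    have w10: "w 1 + w 0 = 1" using wsum(2) by simp
    have "(if odd L then w ((0+a) mod 2) else 1) + (if odd L then w ((1+a) mod 2) else 1) = (if odd L then 1 else (2::real))"
    proof (cases "even a")
      case True
      then have "(0+a) mod 2 = 0" "(1+a) mod 2 = 1" by presburger+
      then show ?thesis using wsum(2) by simp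
    next
      case False
      then have "(0+a) mod 2 = 1" "(1+a) mod 2 = 0" by presburger+
      then show ?thesis using w10 by simp
    qed
    then show ?thesis using wsum(1) by simp
  qed
  finally show ?thesis .
qed

end

context swsetup begin

lemma PF:
  assumes i: "1 \<le> i" and K: "1 \<le> K"
  shows "prob (Ev i K \<inter> Eq i) = (p*q)^(K div 2) * (if odd K then p^2 + q^2 else 1)"
proof -
  define pat where "pat c j = (if j = i-1 then (c+i) mod 2 else (c+j) mod 2)" for c j :: nat
  have Jeq: "{i-1..<i+K} = insert (i-1) {i..<i+K}" using i by auto
  have seteq: "Ev i K \<inter> Eq i = {\<omega>\<in>space M. \<exists>c\<le>1. \<forall>j\<in>{i-1..<i+K}. Y j \<omega> = pat c j}"
  proof (rule set_eqI)
    fix \<omega>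
    show "\<omega> \<in> Ev i K \<inter> Eq i \<longleftrightarrow> \<omega> \<in> {\<omega>\<in>space M. \<exists>c\<le>1. \<forall>j\<in>{i-1..<i+K}. Y j \<omega> = pat c j}"
    proof
      assume "\<omega> \<in> Ev i K \<inter> Eq i"
      then have sp: "\<omega> \<in> space M" and a: "\<forall>j. i \<le> j \<and> j+1 < i+K \<longrightarrow> Y j \<omega> \<noteq> Y (j+1) \<omega>"
        and e: "Y (i-1) \<omega> = Y i \<omega>" unfolding Ev_def Eq_def by auto
      from a obtain c where c: "c \<le> 1" "\<forall>j\<in>{i..<i+K}. Y j \<omega> = (c+j) mod 2"
        unfolding eqv[OF K] by blast
      have "\<forall>j\<in>{i-1..<i+K}. Y j \<omega> = pat c j"
      proof
        fix j assume j: "j \<in> {i-1..<i+K}"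
        show "Y j \<omega> = pat c j"
        proof (cases "j = i-1")
          case True
          then show ?thesis using e c(2) i K by (simp add: pat_def)
        next
          case False
          then have "j \<in> {i..<i+K}" using j by auto
          then show ?thesis using c(2) False by (simp add: pat_def)
        qed
      qed
      then show "\<omega> \<in> {\<omega>\<in>space M. \<exists>c\<le>1. \<forall>j\<in>{i-1..<i+K}. Y j \<omega> = pat c j}"
        using sp c(1) by blast
    next
      assume "\<omega> \<in> {\<omega>\<in>space M. \<exists>c\<le>1. \<forall>j\<in>{i-1..<i+K}. Y j \<omega> = pat c j}"
      then obtain c where sp: "\<omega> \<in> space M" and c: "c \<le> 1" and h: "\<forall>j\<in>{i-1..<i+K}. Y j \<omega> = pat c j"
        by blast
      have h2: "\<forall>j\<in>{i..<i+K}. Y j \<omega> = (c+j) mod 2"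
      proof
        fix j assume j: "j \<in> {i..<i+K}"
        then have "j \<in> {i-1..<i+K}" "j \<noteq> i-1" using i by auto
        then show "Y j \<omega> = (c+j) mod 2" using h by (simp add: pat_def)
      qed
      then have "\<forall>j. i \<le> j \<and> j+1 < i+K \<longrightarrow> Y j \<omega> \<noteq> Y (j+1) \<omega>"
        unfolding eqv[OF K] using c by blast
      moreover have "Y (i-1) \<omega> = Y i \<omega>"
      proof -
        have "i-1 \<in> {i-1..<i+K}" "i \<in> {i..<i+K}" using i K by auto
        then show ?thesis using h h2 by (simp add: pat_def)
      qed
      ultimately show "\<omega> \<in> Ev i K \<inter> Eq i" using sp unfolding Ev_def Eq_def by simp
    qed
  qed
  have m2: "\<And>n::nat. n mod 2 \<le> 1" by presburger
  have h1: "\<forall>c\<le>1. \<forall>j\<in>{i-1..<i+K}. pat c j \<le> (1::nat)" unfolding pat_def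
    using m2 by simp
  have h2: "pat 0 i \<noteq> pat 1 i" using i unfolding pat_def by presburger
  have h3: "i \<in> {i-1..<i+K}" using K by simp
  have pc: "(\<Prod>j\<in>{i-1..<i+K}. w (pat c j)) = w ((c+i) mod 2) * ((w 0 * w 1) ^ (K div 2) * (if odd K then w ((c+i) mod 2) else 1))" for c
  proof -
    have "(\<Prod>j\<in>{i-1..<i+K}. w (pat c j)) = w (pat c (i-1)) * (\<Prod>j\<in>{i..<i+K}. w (pat c j))"
      unfolding Jeq using i by (subst prod.insert) auto
    also have "(\<Prod>j\<in>{i..<i+K}. w (pat c j)) = (\<Prod>j\<in>{i..<i+K}. w ((c+j) mod 2))"
      by (rule prod.cong) (use i in \<open>auto simp: pat_def\<close>)
    also have "\<dots> = (w 0 * w 1) ^ (K div 2) * (if odd K then w ((c+i) mod 2) else 1)"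
      by (rule prodalt)
    finally show ?thesis by (simp add: pat_def)
  qed
  have pr: "prob (Ev i K \<inter> Eq i) =
      w ((0+i) mod 2) * ((w 0 * w 1) ^ (K div 2) * (if odd K then w ((0+i) mod 2) else 1)) +
      w ((1+i) mod 2) * ((w 0 * w 1) ^ (K div 2) * (if odd K then w ((1+i) mod 2) else 1))"
    unfolding seteq two_cyl[OF finite_atLeastLessThan h3 h1 h2] pc by simp
  have key: "w d0 * (if odd K then w d0 else 1) + w d1 * (if odd K then w d1 else 1) = (if odd K then p^2 + q^2 else 1)"
    if "(d0 = 0 \<and> d1 = 1) \<or> (d0 = 1 \<and> d1 = 0)" for d0 d1
    using that wsum(2) wsum(3) wsum(4) by (auto simp: power2_eq_square)
  have "(d0 = 0 \<and> d1 = 1) \<or> (d0 = 1 \<and> d1 = 0)" if "d0 = (0+i) mod 2" "d1 = (1+i) mod (2::nat)" for d0 d1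
    using that by presburger
  then have key2: "w ((0+i) mod 2) * (if odd K then w ((0+i) mod 2) else 1) + w ((1+i) mod 2) * (if odd K then w ((1+i) mod 2) else 1) = (if odd K then p^2 + q^2 else 1)"
    using key by blast
  have "prob (Ev i K \<inter> Eq i) = (w 0 * w 1) ^ (K div 2) *
     (w ((0+i) mod 2) * (if odd K then w ((0+i) mod 2) else 1) + w ((1+i) mod 2) * (if odd K then w ((1+i) mod 2) else 1))"
    unfolding pr by (simp only: algebra_simps)
  also have "\<dots> = (p*q)^(K div 2) * (if odd K then p^2 + q^2 else 1)"
    using key2 wsum(1) by simp
  finally show ?thesis .
qed

end

lemma m2iff: "((x::nat) mod 2 = y mod 2) \<longleftrightarrow> (even x \<longleftrightarrow> even y)"
  by (cases "even x"; cases "even y") (auto simp: even_iff_mod_2_eq_zero odd_iff_mod_2_eq_one)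
lemma par1: "(a + (K-1)) mod 2 = (b + K) mod 2 \<Longrightarrow> 1 \<le> K \<Longrightarrow> (a + j) mod 2 = (b + 1 + j) mod (2::nat)"
proof -
  assume h: "(a + (K-1)) mod 2 = (b + K) mod 2" and K: "1 \<le> K"
  then obtain K' where K': "K = Suc K'" by (cases K) auto
  from h have "even (a + K') \<longleftrightarrow> even (b + Suc K')" unfolding K' m2iff by simp
  then show ?thesis unfolding m2iff by auto
qed
lemma par2: "1 \<le> K \<Longrightarrow> (c+1+(K-1)) mod 2 = (c+K) mod (2::nat)"
  by simp
lemma par3: "(c+1+j) mod 2 = ((c+1) mod 2 + j) mod (2::nat)"
  by (simp add: mod_add_left_eq)
lemma par4: "(n::nat) mod 2 \<le> 1"
  by presburger
context swsetup begin

lemma PG: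
  assumes K: "1 \<le> K"
  shows "prob (Ev K K \<inter> Eq K \<inter> Ev 0 K) = (if odd K then (p*q)^(K-1) * (p^2 + q^2) else 2 * (p*q)^K)"
proof -
  define pat where "pat c j = (if j < K then (c+1+j) mod 2 else (c+j) mod 2)" for c j :: nat
  have seteq: "Ev K K \<inter> Eq K \<inter> Ev 0 K = {\<omega>\<in>space M. \<exists>c\<le>1. \<forall>j\<in>{0..<2*K}. Y j \<omega> = pat c j}"
  proof (rule set_eqI)
    fix \<omega>
    show "\<omega> \<in> Ev K K \<inter> Eq K \<inter> Ev 0 K \<longleftrightarrow> \<omega> \<in> {\<omega>\<in>space M. \<exists>c\<le>1. \<forall>j\<in>{0..<2*K}. Y j \<omega> = pat c j}"
    proof
      assume asm: "\<omega> \<in> Ev K K \<inter> Eq K \<inter> Ev 0 K"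
      then have m1': "\<omega> \<in> Ev K K" and m2': "\<omega> \<in> Eq K" and m3': "\<omega> \<in> Ev 0 K" by simp_all
      from m1' have sp: "\<omega> \<in> space M" and a1: "\<forall>j. K \<le> j \<and> j+1 < K+K \<longrightarrow> Y j \<omega> \<noteq> Y (j+1) \<omega>"
        unfolding Ev_def by simp_all
      from m2' have e: "Y (K-1) \<omega> = Y K \<omega>" unfolding Eq_def by simp
      from m3' have a0: "\<forall>j. 0 \<le> j \<and> j+1 < 0+K \<longrightarrow> Y j \<omega> \<noteq> Y (j+1) \<omega>"
        unfolding Ev_def by simp
      from a1 obtain c1 where c1: "c1 \<le> 1" "\<forall>j\<in>{K..<K+K}. Y j \<omega> = (c1+j) mod 2"
        unfolding eqv[OF K] by blast
      from a0 obtain c0 where c0: "\<forall>j\<in>{0..<0+K}. Y j \<omega> = (c0+j) mod 2"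
        unfolding eqv[OF K] by blast
      have "K - 1 \<in> {0..<0+K}" "K \<in> {K..<K+K}" using K by auto
      then have rel: "(c0 + (K-1)) mod 2 = (c1 + K) mod 2" using c0 c1(2) e by simp
      have "\<forall>j\<in>{0..<2*K}. Y j \<omega> = pat c1 j"
      proof
        fix j assume j: "j \<in> {0..<2*K}"
        show "Y j \<omega> = pat c1 j"
        proof (cases "j < K")
          case True
          then have "Y j \<omega> = (c0+j) mod 2" using c0 by simp
          also have "\<dots> = (c1+1+j) mod 2" using par1[OF rel K] .
          finally show ?thesis using True by (simp add: pat_def)
        next
          case False
          then have "j \<in> {K..<K+K}" using j by auto
          then show ?thesis using c1(2) False by (simp add: pat_def)
        qed
      qed
      then show "\<omega> \<in> {\<omega>\<in>space M. \<exists>c\<le>1. \<forall>j\<in>{0..<2*K}. Y j \<omega> = pat c j}"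
        using sp c1(1) by blast
    next
      assume "\<omega> \<in> {\<omega>\<in>space M. \<exists>c\<le>1. \<forall>j\<in>{0..<2*K}. Y j \<omega> = pat c j}"
      then obtain c where sp: "\<omega> \<in> space M" and c: "c \<le> 1" and h: "\<forall>j\<in>{0..<2*K}. Y j \<omega> = pat c j"
        by blast
      have h1: "\<forall>j\<in>{K..<K+K}. Y j \<omega> = (c+j) mod 2"
      proof
        fix j assume j: "j \<in> {K..<K+K}"
        then have "j \<in> {0..<2*K}" "\<not> j < K" by auto
        then show "Y j \<omega> = (c+j) mod 2" using h by (simp add: pat_def)
      qed
      have h0: "\<forall>j\<in>{0..<0+K}. Y j \<omega> = ((c+1) mod 2 + j) mod 2"
      proof
        fix j assume j: "j \<in> {0..<0+K}"
        then have "j \<in> {0..<2*K}" "j < K" by auto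
        then have "Y j \<omega> = (c+1+j) mod 2" using h by (simp add: pat_def)
        also have "\<dots> = ((c+1) mod 2 + j) mod 2" by (rule par3)
        finally show "Y j \<omega> = ((c+1) mod 2 + j) mod 2" .
      qed
      have "\<forall>j. K \<le> j \<and> j+1 < K+K \<longrightarrow> Y j \<omega> \<noteq> Y (j+1) \<omega>"
        unfolding eqv[OF K] using c h1 by blast
      moreover have "\<forall>j. 0 \<le> j \<and> j+1 < 0+K \<longrightarrow> Y j \<omega> \<noteq> Y (j+1) \<omega>"
      proof -
        have "(c+1) mod 2 \<le> 1" by (rule par4)
        then show ?thesis unfolding eqv[OF K] using h0 by blast
      qed
      moreover have "Y (K-1) \<omega> = Y K \<omega>"
      proof -
        have "K-1 \<in> {0..<2*K}" "K-1 < K" "K \<in> {0..<2*K}" using K by auto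
        then have "Y (K-1) \<omega> = (c+1+(K-1)) mod 2" "Y K \<omega> = (c+K) mod 2" using h by (auto simp: pat_def)
        moreover have "(c+1+(K-1)) mod 2 = (c+K) mod (2::nat)" using K by (rule par2)
        ultimately show ?thesis by simp
      qed
      ultimately show "\<omega> \<in> Ev K K \<inter> Eq K \<inter> Ev 0 K" using sp unfolding Ev_def Eq_def by simp
    qed
  qed
  have m2: "\<And>n::nat. n mod 2 \<le> 1" by presburger
  have h1: "\<forall>c\<le>1. \<forall>j\<in>{0..<2*K}. pat c j \<le> (1::nat)" unfolding pat_def
    using m2 by simp
  have h2: "pat 0 0 \<noteq> pat 1 0" using K unfolding pat_def by simp
  have h3: "0 \<in> {0..<2*K}" using K by simp
  have pc: "(\<Prod>j\<in>{0..<2*K}. w (pat c j)) =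
     ((w 0 * w 1) ^ (K div 2) * (if odd K then w ((c+1+0) mod 2) else 1)) *
     ((w 0 * w 1) ^ (K div 2) * (if odd K then w ((c+K) mod 2) else 1))" for c
  proof -
    have "(\<Prod>j\<in>{0..<2*K}. w (pat c j)) = (\<Prod>j\<in>{0..<K}. w (pat c j)) * (\<Prod>j\<in>{K..<K+K}. w (pat c j))"
      using prod.atLeastLessThan_concat[of 0 K "2*K" "\<lambda>j. w (pat c j)"] by (simp add: mult_2)
    also have "(\<Prod>j\<in>{0..<K}. w (pat c j)) = (\<Prod>j\<in>{0..<0+K}. w ((c+1+j) mod 2))"
      by (rule prod.cong) (auto simp: pat_def)
    also have "\<dots> = (w 0 * w 1) ^ (K div 2) * (if odd K then w ((c+1+0) mod 2) else 1)"
      by (rule prodalt)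
    also have "(\<Prod>j\<in>{K..<K+K}. w (pat c j)) = (\<Prod>j\<in>{K..<K+K}. w ((c+j) mod 2))"
      by (rule prod.cong) (auto simp: pat_def)
    also have "\<dots> = (w 0 * w 1) ^ (K div 2) * (if odd K then w ((c+K) mod 2) else 1)"
      by (rule prodalt)
    finally show ?thesis .
  qed
  have pr: "prob (Ev K K \<inter> Eq K \<inter> Ev 0 K) =
     ((w 0 * w 1) ^ (K div 2) * (if odd K then w ((0+1+0) mod 2) else 1)) *
     ((w 0 * w 1) ^ (K div 2) * (if odd K then w ((0+K) mod 2) else 1)) +
     ((w 0 * w 1) ^ (K div 2) * (if odd K then w ((1+1+0) mod 2) else 1)) *
     ((w 0 * w 1) ^ (K div 2) * (if odd K then w ((1+K) mod 2) else 1))"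
    unfolding seteq two_cyl[OF finite_atLeastLessThan h3 h1 h2] pc by simp
  show ?thesis
  proof (cases "odd K")
    case True
    then obtain k where k: "K = 2*k+1" using oddE by blast
    have "(0+K) mod 2 = 1" "(1+K) mod 2 = (0::nat)" using k by simp_all
    then have "prob (Ev K K \<inter> Eq K \<inter> Ev 0 K) = (q*p)^k * p * ((q*p)^k * p) + (q*p)^k * q * ((q*p)^k * q)"
      unfolding pr using True k wsum by simp
    also have "\<dots> = (p*q)^(K-1) * (p^2 + q^2)"
    proof -
      have "K - 1 = k + k" using k by simp
      then have e1: "(p*q)^(K-1) = (q*p)^k * (q*p)^k" by (simp add: power_add mult.commute)
      show ?thesis unfolding e1 power2_eq_square by (simp add: algebra_simps)
    qed
    finally show ?thesis using True by simp
  next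
    case False
    then obtain k where k: "K = 2*k" using evenE by blast
    have "prob (Ev K K \<inter> Eq K \<inter> Ev 0 K) = (q*p)^k * (q*p)^k + (q*p)^k * (q*p)^k"
      unfolding pr using False k wsum by simp
    also have "\<dots> = 2 * (p*q)^K"
    proof -
      have "K = k + k" using k by simp
      then have e1: "(p*q)^K = (q*p)^k * (q*p)^k" by (simp add: power_add mult.commute)
      show ?thesis unfolding e1 by simp
    qed
    finally show ?thesis using False by simp
  qed
qed

end

context swsetup begin

lemma Dgen:
  assumes "1 \<le> i" "\<omega> \<in> Ev i K" "\<omega> \<notin> Ev (i-1) K"
  shows "Y (i-1) \<omega> = Y i \<omega>"
proof -
  from assms(2) have sp: "\<omega> \<in> space M" and a: "\<forall>j. i \<le> j \<and> j+1 < i+K \<longrightarrow> Y j \<omega> \<noteq> Y (j+1) \<omega>"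
    unfolding Ev_def by simp_all
  from assms(3) sp have "\<not> (\<forall>j. i-1 \<le> j \<and> j+1 < i-1+K \<longrightarrow> Y j \<omega> \<noteq> Y (j+1) \<omega>)"
    unfolding Ev_def by simp
  then obtain j where j: "i-1 \<le> j" "j+1 < i-1+K" "Y j \<omega> = Y (j+1) \<omega>" by blast
  have "j = i-1"
  proof (rule ccontr)
    assume "j \<noteq> i-1"
    then have "i \<le> j \<and> j+1 < i+K" using j assms(1) by auto
    then show False using a j(3) by blast
  qed
  then show ?thesis using j(3) assms(1) by simp
qed

lemma Dgen2:
  assumes "1 \<le> i" "i' \<le> i-1" "i < i'+K" "\<omega> \<in> Ev i' K"
  shows "Y (i-1) \<omega> \<noteq> Y i \<omega>"
proof -
  from assms(4) have a: "\<forall>j. i' \<le> j \<and> j+1 < i'+K \<longrightarrow> Y j \<omega> \<noteq> Y (j+1) \<omega>"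
    unfolding Ev_def by simp
  have "i' \<le> i-1 \<and> (i-1)+1 < i'+K" using assms by auto
  then have "Y (i-1) \<omega> \<noteq> Y (i-1+1) \<omega>" using a by blast
  then show ?thesis using assms(1) by simp
qed

lemma D1:
  assumes i: "1 \<le> i" "i < K"
  shows "Ev i K - (\<Union>i'<i. Ev i' K) = Ev i K \<inter> Eq i"
proof (rule set_eqI)
  fix \<omega>
  show "\<omega> \<in> Ev i K - (\<Union>i'<i. Ev i' K) \<longleftrightarrow> \<omega> \<in> Ev i K \<inter> Eq i"
  proof
    assume h: "\<omega> \<in> Ev i K - (\<Union>i'<i. Ev i' K)"
    then have inE: "\<omega> \<in> Ev i K" by simp
    have "i - 1 < i" using i by simp
    then have "\<omega> \<notin> Ev (i-1) K" using h by simp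
    then have "Y (i-1) \<omega> = Y i \<omega>" using Dgen[OF i(1) inE] by simp
    moreover have "\<omega> \<in> space M" using inE unfolding Ev_def by simp
    ultimately show "\<omega> \<in> Ev i K \<inter> Eq i" using inE unfolding Eq_def by simp
  next
    assume h: "\<omega> \<in> Ev i K \<inter> Eq i"
    then have inE: "\<omega> \<in> Ev i K" and e: "Y (i-1) \<omega> = Y i \<omega>" unfolding Eq_def by simp_all
    have "\<omega> \<notin> Ev i' K" if "i' < i" for i'
    proof
      assume "\<omega> \<in> Ev i' K"
      moreover have "i' \<le> i-1" "i < i'+K" using that i by auto
      ultimately have "Y (i-1) \<omega> \<noteq> Y i \<omega>" using Dgen2[OF i(1)] by simp
      then show False using e by simp
    qed
    then show "\<omega> \<in> Ev i K - (\<Union>i'<i. Ev i' K)" using inE by simp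
  qed
qed

lemma D2:
  assumes K: "1 \<le> K"
  shows "Ev K K - (\<Union>i'<K. Ev i' K) = (Ev K K \<inter> Eq K) - Ev 0 K"
proof (rule set_eqI)
  fix \<omega>
  show "\<omega> \<in> Ev K K - (\<Union>i'<K. Ev i' K) \<longleftrightarrow> \<omega> \<in> (Ev K K \<inter> Eq K) - Ev 0 K"
  proof
    assume h: "\<omega> \<in> Ev K K - (\<Union>i'<K. Ev i' K)"
    then have inE: "\<omega> \<in> Ev K K" by simp
    have "K - 1 < K" "0 < K" using K by simp_all
    then have n1: "\<omega> \<notin> Ev (K-1) K" and n0: "\<omega> \<notin> Ev 0 K" using h by simp_all
    then have "Y (K-1) \<omega> = Y K \<omega>" using Dgen[OF K inE] by simp
    moreover have "\<omega> \<in> space M" using inE unfolding Ev_def by simp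
    ultimately show "\<omega> \<in> (Ev K K \<inter> Eq K) - Ev 0 K" using inE n0 unfolding Eq_def by simp
  next
    assume h: "\<omega> \<in> (Ev K K \<inter> Eq K) - Ev 0 K"
    then have inE: "\<omega> \<in> Ev K K" and e: "Y (K-1) \<omega> = Y K \<omega>" and n0: "\<omega> \<notin> Ev 0 K"
      unfolding Eq_def by simp_all
    have "\<omega> \<notin> Ev i' K" if "i' < K" for i'
    proof (cases "i' = 0")
      case True
      then show ?thesis using n0 by simp
    next
      case False
      show ?thesis
      proof
        assume ev: "\<omega> \<in> Ev i' K"
        have l1: "i' \<le> K-1" and l2: "K < i'+K" using that False by auto
        have "Y (K-1) \<omega> \<noteq> Y K \<omega>" by (rule Dgen2[OF K l1 l2 ev])
        then show False using e by simp
      qed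
    qed
    then show "\<omega> \<in> Ev K K - (\<Union>i'<K. Ev i' K)" using inE by simp
  qed
qed

lemma T_sets:
  assumes K: "1 \<le> K"
  shows "{\<omega>\<in>space M. K - 1 \<le> longest_switches (\<lambda>i. X i \<omega>) m (2*K)} \<in> events"
proof -
  have "{\<omega>\<in>space M. K - 1 \<le> longest_switches (\<lambda>i. X i \<omega>) m (2*K)} =
    {\<omega>\<in>space M. \<exists>n\<in>{K..2*K}. \<exists>i\<in>{m..m+2*K-n}. switches (\<lambda>i. X0 i \<omega>) i n = n - 1}"
  proof (rule Collect_cong)
    fix \<omega>
    have "longest_switches (\<lambda>i. X i \<omega>) m (2*K) = longest_switches (\<lambda>i. X0 i \<omega>) m (2*K)"
      by (rule longest_cong) (use m1 in \<open>simp add: X0_def max_def\<close>)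
    then show "(\<omega> \<in> space M \<and> K - 1 \<le> longest_switches (\<lambda>i. X i \<omega>) m (2*K)) =
      (\<omega> \<in> space M \<and> (\<exists>n\<in>{K..2*K}. \<exists>i\<in>{m..m+2*K-n}. switches (\<lambda>i. X0 i \<omega>) i n = n - 1))"
      using longest_ge[OF K, of "\<lambda>i. X0 i \<omega>" m] unfolding H_event_def by auto
  qed
  also have "\<dots> \<in> events"
    unfolding switches_def by measurable
  finally show ?thesis .
qed

end

context swsetup begin

lemma bnd_ae: "AE \<omega> in M. \<forall>j\<in>{..<n}. X (m+j) \<omega> \<le> 1"
proof (rule AE_finite_allI)
  fix j
  have e0: "{\<omega>\<in>space M. X (m+j) \<omega> = 0} \<in> events" by measurable
  have e1: "{\<omega>\<in>space M. X (m+j) \<omega> = 1} \<in> events" by measurable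
  have "{\<omega>\<in>space M. X (m+j) \<omega> \<le> 1} = {\<omega>\<in>space M. X (m+j) \<omega> = 0} \<union> {\<omega>\<in>space M. X (m+j) \<omega> = 1}"
    by auto
  moreover have "{\<omega>\<in>space M. X (m+j) \<omega> = 0} \<inter> {\<omega>\<in>space M. X (m+j) \<omega> = 1} = {}" by auto
  ultimately have "prob {\<omega>\<in>space M. X (m+j) \<omega> \<le> 1} = prob {\<omega>\<in>space M. X (m+j) \<omega> = 0} + prob {\<omega>\<in>space M. X (m+j) \<omega> = 1}"
    using finite_measure_Union[OF e0 e1] by simp
  also have "\<dots> = q + p" using P0[of "m+j"] P1[of "m+j"] m1 by simp
  also have "\<dots> = 1" using qdef by simp
  finally have "AE \<omega> in M. \<omega> \<in> {\<omega>\<in>space M. X (m+j) \<omega> \<le> 1}" by (rule AE_prob_1)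
  then show "AE \<omega> in M. X (m+j) \<omega> \<le> 1" by (rule eventually_mono) simp
qed simp

lemma main:
  assumes K: "K \<ge> 1"
  shows "measure M {\<omega> \<in> space M. longest_switches (\<lambda>i. X i \<omega>) m (2*K) \<ge> K - 1} =
    (if even K
     then (K + 2) * (p*q) ^ (K div 2) - 2 * (p*q) ^ K
     else (K + 1 - 2*K*p*q) * (p*q) ^ ((K - 1) div 2) - (1 - 2*p*q) * (p*q) ^ (K - 1))"
proof -
  let ?T = "{\<omega> \<in> space M. longest_switches (\<lambda>i. X i \<omega>) m (2*K) \<ge> K - 1}"
  let ?U = "\<Union>i\<le>K. Ev i K"
  have Tev: "?T \<in> events" using T_sets[OF K] by simp
  have Uev: "?U \<in> events" by (rule sets.finite_UN) simp_all
  have ae: "AE \<omega> in M. \<omega> \<in> ?T \<longleftrightarrow> \<omega> \<in> ?U"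
    using bnd_ae[of "2*K"]
  proof (rule eventually_mono)
    fix \<omega> assume b: "\<forall>j\<in>{..<2*K}. X (m+j) \<omega> \<le> 1"
    show "\<omega> \<in> ?T \<longleftrightarrow> \<omega> \<in> ?U"
    proof (cases "\<omega> \<in> space M")
      case False
      then show ?thesis unfolding Ev_def by simp
    next
      case sp: True
      have b': "\<forall>j<2*K. X (m+j) \<omega> \<le> 1" using b by simp
      have eqY: "Y j \<omega> = X (m+j) \<omega>" if "j < 2*K" for j
      proof -
        have "X (m+j) \<omega> \<le> 1" using b' that by simp
        then show ?thesis unfolding Y_def by auto
      qed
      have sw: "(X (m+j) \<omega> \<noteq> X (m+j+1) \<omega>) = (Y j \<omega> \<noteq> Y (j+1) \<omega>)" if "j+1 < 2*K" for j
      proof -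
        have "Y j \<omega> = X (m+j) \<omega>" "Y (j+1) \<omega> = X (m+(j+1)) \<omega>" using that eqY by simp_all
        then show ?thesis by simp
      qed
      have "\<omega> \<in> ?T \<longleftrightarrow> (\<exists>i\<le>K. \<forall>j. i \<le> j \<and> j+1 < i+K \<longrightarrow> X (m+j) \<omega> \<noteq> X (m+j+1) \<omega>)"
        using event_char[OF K b'] sp by simp
      also have "\<dots> \<longleftrightarrow> (\<exists>i\<le>K. \<forall>j. i \<le> j \<and> j+1 < i+K \<longrightarrow> Y j \<omega> \<noteq> Y (j+1) \<omega>)"
      proof -
        have "(\<forall>j. i \<le> j \<and> j+1 < i+K \<longrightarrow> X (m+j) \<omega> \<noteq> X (m+j+1) \<omega>) \<longleftrightarrow>
              (\<forall>j. i \<le> j \<and> j+1 < i+K \<longrightarrow> Y j \<omega> \<noteq> Y (j+1) \<omega>)" if "i \<le> K" for i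
        proof -
          have "(i \<le> j \<and> j+1 < i+K \<longrightarrow> X (m+j) \<omega> \<noteq> X (m+j+1) \<omega>) \<longleftrightarrow>
                (i \<le> j \<and> j+1 < i+K \<longrightarrow> Y j \<omega> \<noteq> Y (j+1) \<omega>)" for j
          proof (cases "i \<le> j \<and> j+1 < i+K")
            case True
            then have "j+1 < 2*K" using that by simp
            then show ?thesis using sw[of j] by simp
          next
            case False
            then show ?thesis by (simp only: False simp_thms)
          qed
          then show ?thesis by simp
        qed
        then show ?thesis by (meson order_refl)
      qed
      also have "\<dots> \<longleftrightarrow> \<omega> \<in> ?U" unfolding Ev_def UN_iff Bex_def atMost_iff using sp by simp
      finally show ?thesis .
    qed
  qed
  have "prob ?T = prob ?U" by (rule measure_eq_AE[OF ae Tev Uev])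
  also have "prob ?U = prob (Ev 0 K) + (\<Sum>i\<in>{1..K}. prob (Ev i K - (\<Union>i'<i. Ev i' K)))"
    by (rule telescope) simp
  also have "(\<Sum>i\<in>{1..K}. prob (Ev i K - (\<Union>i'<i. Ev i' K))) =
      prob (Ev K K - (\<Union>i'<K. Ev i' K)) + (\<Sum>i\<in>{1..<K}. prob (Ev i K - (\<Union>i'<i. Ev i' K)))"
  proof -
    have "{1..K} = insert K {1..<K}" using K by auto
    then show ?thesis by simp
  qed
  also have "(\<Sum>i\<in>{1..<K}. prob (Ev i K - (\<Union>i'<i. Ev i' K))) =
      (\<Sum>i\<in>{1..<K}. (p*q)^(K div 2) * (if odd K then p^2 + q^2 else 1))"
  proof (rule sum.cong)
    fix i assume "i \<in> {1..<K}"
    then have i: "1 \<le> i" "i < K" by auto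
    show "prob (Ev i K - (\<Union>i'<i. Ev i' K)) = (p*q)^(K div 2) * (if odd K then p^2 + q^2 else 1)"
      unfolding D1[OF i] using PF[OF i(1) K] .
  qed simp
  also have "\<dots> = real (K - 1) * ((p*q)^(K div 2) * (if odd K then p^2 + q^2 else 1))"
    by simp
  also have "prob (Ev K K - (\<Union>i'<K. Ev i' K)) = prob (Ev K K \<inter> Eq K) - prob (Ev K K \<inter> Eq K \<inter> Ev 0 K)"
    unfolding D2[OF K] by (rule finite_measure_Diff') simp_all
  also have "\<dots> = (p*q)^(K div 2) * (if odd K then p^2 + q^2 else 1) -
      (if odd K then (p*q)^(K-1) * (p^2 + q^2) else 2 * (p*q)^K)"
    using PF[OF K K] PG[OF K] by simp
  also have "prob (Ev 0 K) = (p*q)^(K div 2) * (if odd K then 1 else 2)"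
    using PE[OF K] .
  finally have tot: "prob ?T = (p*q)^(K div 2) * (if odd K then 1 else 2) +
      ((p*q)^(K div 2) * (if odd K then p^2 + q^2 else 1) -
      (if odd K then (p*q)^(K-1) * (p^2 + q^2) else 2 * (p*q)^K) +
      real (K - 1) * ((p*q)^(K div 2) * (if odd K then p^2 + q^2 else 1)))" .
  have rK: "real (K - 1) = real K - 1" using K by simp
  show ?thesis
  proof (cases "even K")
    case True
    then show ?thesis unfolding tot rK by (simp add: algebra_simps)
  next
    case False
    have s: "p^2 + q^2 = 1 - 2*p*q" unfolding qdef by (simp add: power2_eq_square algebra_simps)
    have d: "(K - 1) div 2 = K div 2" using False by presburger
    show ?thesis using False unfolding tot rK s d by (simp add: algebra_simps)
  qed
qed

end

theorem lemma3p2: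
  fixes M :: "'a measure" and X :: "nat \<Rightarrow> 'a \<Rightarrow> nat"
    and p q :: real and K m :: nat
  assumes "prob_space M"
    and "0 < p" and "p < 1" and "q = 1 - p"
    and "\<And>i. i \<ge> 1 \<Longrightarrow> X i \<in> measurable M (count_space UNIV)"
    and "prob_space.indep_vars M (\<lambda>_. count_space UNIV) X {1..}"
    and "\<And>i. i \<ge> 1 \<Longrightarrow> measure M {\<omega> \<in> space M. X i \<omega> = 1} = p"
    and "\<And>i. i \<ge> 1 \<Longrightarrow> measure M {\<omega> \<in> space M. X i \<omega> = 0} = q"
    and "K \<ge> 1" and "m \<ge> 1"
  shows "measure M {\<omega> \<in> space M. longest_switches (\<lambda>i. X i \<omega>) m (2*K) \<ge> K - 1} =
    (if even K
     then (K + 2) * (p*q) ^ (K div 2) - 2 * (p*q) ^ K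
     else (K + 1 - 2*K*p*q) * (p*q) ^ ((K - 1) div 2) - (1 - 2*p*q) * (p*q) ^ (K - 1))"
proof -
  interpret swsetup M X p q m
    using assms unfolding swsetup_def swsetup_axioms_def by auto
  note mm = main[OF assms(9)]
  show ?thesis using mm by simp
qed

end
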